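(* Let $F$ be a forest on $n\ge 2$ vertices and let $v\in V(F)$. Then $$\frac{\xi(F)}{\xi(F-v)}\le \begin{cases} 2^{\frac{n-3}{2}}+1 & \text{if } n \text{ is odd},\\ 2^{\frac{n-2}{2}}+1 & \text{if } n \text{ is even}.\end{cases}$$
   Context: For a graph $H$, $\xi(H)$ denotes the number of maximum independent sets of $H$ (independent sets of size equal to the independence number $\alpha(H)$); for the graph with no vertices, $\xi=1$. $F-v$ is the graph obtained from $F$ by deleting $v$ and its incident edges. *)

theory Defs
  imports Complex_Main
begin

definition simple_graph :: "'a set \<Rightarrow> ('a \<Rightarrow> 'a \<Rightarrow> bool) \<Rightarrow> bool" where
  "simple_graph V E \<longleftrightarrow> finite V \<and> (\<forall>x y. E x y \<longrightarrow> E y x) \<and> (\<forall>x. \<not> E x x)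
     \<and> (\<forall>x y. E x y \<longrightarrow> x \<in> V \<and> y \<in> V)"

definition has_cycle :: "'a set \<Rightarrow> ('a \<Rightarrow> 'a \<Rightarrow> bool) \<Rightarrow> bool" where
  "has_cycle V E \<longleftrightarrow> (\<exists>xs. length xs \<ge> 3 \<and> distinct xs \<and> set xs \<subseteq> V
     \<and> (\<forall>i. Suc i < length xs \<longrightarrow> E (xs ! i) (xs ! Suc i)) \<and> E (last xs) (hd xs))"

definition forest :: "'a set \<Rightarrow> ('a \<Rightarrow> 'a \<Rightarrow> bool) \<Rightarrow> bool" where
  "forest V E \<longleftrightarrow> simple_graph V E \<and> \<not> has_cycle V E"

definition indep_set :: "'a set \<Rightarrow> ('a \<Rightarrow> 'a \<Rightarrow> bool) \<Rightarrow> 'a set \<Rightarrow> bool" where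
  "indep_set V E S \<longleftrightarrow> S \<subseteq> V \<and> (\<forall>x\<in>S. \<forall>y\<in>S. \<not> E x y)"

definition alpha :: "'a set \<Rightarrow> ('a \<Rightarrow> 'a \<Rightarrow> bool) \<Rightarrow> nat" where
  "alpha V E = Max (card ` {S. indep_set V E S})"

definition xi :: "'a set \<Rightarrow> ('a \<Rightarrow> 'a \<Rightarrow> bool) \<Rightarrow> nat" where
  "xi V E = card {S. indep_set V E S \<and> card S = alpha V E}"

definition del_vertex :: "'a set \<Rightarrow> ('a \<Rightarrow> 'a \<Rightarrow> bool) \<Rightarrow> 'a \<Rightarrow> 'a set \<times> ('a \<Rightarrow> 'a \<Rightarrow> bool)" where
  "del_vertex V E v = (V - {v}, \<lambda>x y. E x y \<and> x \<noteq> v \<and> y \<noteq> v)"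

end

theory Submission imports Defs begin

definition restr :: "('a \<Rightarrow> 'a \<Rightarrow> bool) \<Rightarrow> 'a set \<Rightarrow> 'a \<Rightarrow> 'a \<Rightarrow> bool" where
  "restr E D x y \<longleftrightarrow> E x y \<and> x \<notin> D \<and> y \<notin> D"

definition mis :: "'a set \<Rightarrow> ('a \<Rightarrow> 'a \<Rightarrow> bool) \<Rightarrow> 'a set set" where
  "mis V E = {S. indep_set V E S \<and> card S = alpha V E}"

lemma xi_mis: "xi V E = card (mis V E)"
  by (simp add: xi_def mis_def)

lemma finite_indep: "finite V \<Longrightarrow> finite {S. indep_set V E S}"
  by (rule finite_subset[of _ "Pow V"]) (auto simp: indep_set_def)

lemma finite_mis: "finite V \<Longrightarrow> finite (mis V E)"
  by (rule finite_subset[of _ "Pow V"]) (auto simp: indep_set_def mis_def)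

lemma indep_le_alpha: "finite V \<Longrightarrow> indep_set V E S \<Longrightarrow> card S \<le> alpha V E"
  unfolding alpha_def by (rule Max_ge) (auto intro: finite_indep)

lemma alpha_attained: "finite V \<Longrightarrow> \<exists>S. indep_set V E S \<and> card S = alpha V E"
proof -
  assume f: "finite V"
  have "{} \<in> {S. indep_set V E S}" by (simp add: indep_set_def)
  then have "alpha V E \<in> card ` {S. indep_set V E S}"
    unfolding alpha_def by (intro Max_in) (auto intro: finite_indep f)
  then show ?thesis by auto
qed

lemma xi_pos: "finite V \<Longrightarrow> xi V E \<ge> 1"
  using alpha_attained[of V E] finite_mis[of V E]
  by (auto simp: xi_mis mis_def Suc_le_eq card_gt_0_iff)

lemma indep_restr: "indep_set (V - D) (restr E D) T \<Longrightarrow> indep_set V E T"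
  by (auto simp: indep_set_def restr_def)

lemma indep_restr2: "indep_set V E T \<Longrightarrow> T \<inter> D = {} \<Longrightarrow> indep_set (V - D) (restr E D) T"
  by (auto simp: indep_set_def restr_def)

lemma alpha_restr_le: "finite V \<Longrightarrow> alpha (V - D) (restr E D) \<le> alpha V E"
  using alpha_attained[of "V - D" "restr E D"]
  by (metis finite_Diff indep_le_alpha indep_restr)

lemma insert_indep: "simple_graph V E \<Longrightarrow> indep_set V E S \<Longrightarrow> u \<in> V \<Longrightarrow> (\<forall>x\<in>S. \<not> E u x)
   \<Longrightarrow> indep_set V E (insert u S)"
  unfolding simple_graph_def indep_set_def by blast

lemma forest_restr: "forest V E \<Longrightarrow> forest (V - D) (restr E D)"
proof -
  assume F: "forest V E"
  have sg: "simple_graph (V - D) (restr E D)"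
    using F unfolding forest_def simple_graph_def restr_def by auto
  have "\<not> has_cycle (V - D) (restr E D)"
  proof
    assume "has_cycle (V - D) (restr E D)"
    then obtain xs where xs: "length xs \<ge> 3" "distinct xs" "set xs \<subseteq> V - D"
      "\<forall>i. Suc i < length xs \<longrightarrow> restr E D (xs ! i) (xs ! Suc i)" "restr E D (last xs) (hd xs)"
      unfolding has_cycle_def by blast
    have "has_cycle V E" unfolding has_cycle_def
      apply (rule exI[of _ xs])
      using xs by (auto simp: restr_def)
    then show False using F by (simp add: forest_def)
  qed
  then show ?thesis using sg by (simp add: forest_def)
qed

lemma cover:
  assumes fin: "finite V" and P: "P \<subseteq> mis V E" and X: "finite X"
    and one: "\<And>S. S \<in> P \<Longrightarrow> \<exists>x\<in>X. S \<inter> D = {x}"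
    and al: "alpha (V - D) (restr E D) + 1 \<le> alpha V E"
  shows "card P \<le> card X * xi (V - D) (restr E D)"
proof -
  let ?M = "mis (V - D) (restr E D)"
  have "P \<subseteq> (\<lambda>(x, T). insert x T) ` (X \<times> ?M)"
  proof
    fix S assume S: "S \<in> P"
    then obtain x where x: "x \<in> X" "S \<inter> D = {x}" using one by blast
    have Si: "indep_set V E S" "card S = alpha V E" using S P by (auto simp: mis_def)
    have fS: "finite S" using Si fin by (auto simp: indep_set_def intro: finite_subset)
    have Ti: "indep_set (V - D) (restr E D) (S - D)"
      using Si(1) by (intro indep_restr2) (auto simp: indep_set_def)
    have "card (S - D) = card S - 1"
      proof -
      have "S - D = S - {x}" using x by blast
      moreover have "x \<in> S" using x by blast
      ultimately show ?thesis using fS by (simp add: card_Diff_singleton)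
    qed
    moreover have "card (S - D) \<le> alpha (V - D) (restr E D)"
      using Ti fin by (intro indep_le_alpha) auto
    ultimately have "card (S - D) = alpha (V - D) (restr E D)" using al Si by linarith
    then have "S - D \<in> ?M" using Ti by (simp add: mis_def)
    moreover have "S = insert x (S - D)" using x by blast
    ultimately show "S \<in> (\<lambda>(x, T). insert x T) ` (X \<times> ?M)"
      using x by (intro image_eqI[of _ _ "(x, S - D)"]) auto
  qed
  then have "card P \<le> card ((\<lambda>(x, T). insert x T) ` (X \<times> ?M))"
    using X fin by (intro card_mono) (auto intro: finite_mis)
  also have "\<dots> \<le> card (X \<times> ?M)"
    using X finite_mis[OF finite_Diff[OF fin]] by (intro card_image_le finite_cartesian_product)
  also have "\<dots> = card X * xi (V - D) (restr E D)" by (simp add: card_cartesian_product xi_mis)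
  finally show ?thesis .
qed

lemma forest_leaf:
  assumes F: "forest V E" and ne: "V \<noteq> {}"
  shows "\<exists>u\<in>V. \<forall>w w'. E u w \<longrightarrow> E u w' \<longrightarrow> w = w'"
proof -
  have sg: "simple_graph V E" and nc: "\<not> has_cycle V E" using F by (auto simp: forest_def)
  have fin: "finite V" and sym: "\<And>x y. E x y \<Longrightarrow> E y x" and irr: "\<And>x. \<not> E x x"
    and inV: "\<And>x y. E x y \<Longrightarrow> x \<in> V \<and> y \<in> V"
    using sg by (auto simp: simple_graph_def)
  define Q where "Q xs \<longleftrightarrow> xs \<noteq> [] \<and> distinct xs \<and> set xs \<subseteq> V
     \<and> (\<forall>i. Suc i < length xs \<longrightarrow> E (xs ! i) (xs ! Suc i))" for xs
  obtain a where a: "a \<in> V" using ne by blast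
  have Qa: "Q [a]" using a by (simp add: Q_def)
  have bnd: "length xs \<le> card V" if "Q xs" for xs
    using that fin by (metis Q_def card_mono distinct_card)
  obtain n where n: "\<exists>xs. Q xs \<and> length xs = n" "\<And>m. (\<exists>xs. Q xs \<and> length xs = m) \<Longrightarrow> m \<le> n"
    using Nat.ex_has_greatest_nat[of "\<lambda>m. \<exists>xs. Q xs \<and> length xs = m" 1 "card V"] Qa bnd by force
  then obtain xs where xs: "Q xs" "length xs = n" by blast
  have q: "xs \<noteq> []" "distinct xs" "set xs \<subseteq> V" "\<And>i. Suc i < length xs \<Longrightarrow> E (xs ! i) (xs ! Suc i)"
    using xs(1) by (auto simp: Q_def)
  let ?u = "hd xs"
  have hu: "?u = xs ! 0" using q(1) by (simp add: hd_conv_nth)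
  have nb: "y = xs ! 1" if y: "E ?u y" for y
  proof -
    have yin: "y \<in> set xs"
    proof (rule ccontr)
      assume yn: "y \<notin> set xs"
      have "Q (y # xs)" unfolding Q_def
      proof (intro conjI allI impI)
        show "distinct (y # xs)" using yn q by simp
        show "set (y # xs) \<subseteq> V" using inV[OF y] q by simp
        fix i assume i: "Suc i < length (y # xs)"
        show "E ((y # xs) ! i) ((y # xs) ! Suc i)"
        proof (cases i)
          case 0 then show ?thesis using sym[OF y] hu by simp
        next
          case (Suc j) then show ?thesis using q(4)[of j] i by simp
        qed
      qed simp
      then have "Suc n \<le> n" using n(2)[of "Suc n"] xs(2) by fastforce
      then show False by simp
    qed
    then obtain j where j: "j < length xs" "y = xs ! j" by (metis in_set_conv_nth)
    have "j \<noteq> 0" using irr y j hu by (metis)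
    moreover have "\<not> j \<ge> 2"
    proof
      assume j2: "j \<ge> 2"
      let ?c = "take (Suc j) xs"
      have "has_cycle V E" unfolding has_cycle_def
      proof (intro exI conjI allI impI)
        show "3 \<le> length ?c" using j j2 by simp
        show "distinct ?c" using q by simp
        show "set ?c \<subseteq> V" using q by (meson order_trans set_take_subset)
        fix i assume "Suc i < length ?c"
        then show "E (?c ! i) (?c ! Suc i)" using q(4)[of i] j by simp
      next
        have "last ?c = xs ! j" using j by (simp add: take_Suc_conv_app_nth)
        moreover have "hd ?c = ?u" using j q(1) by (simp add: hd_conv_nth)
        ultimately show "E (last ?c) (hd ?c)" using sym[OF y] j by simp
      qed
      then show False using nc by simp
    qed
    ultimately show ?thesis using j by (metis One_nat_def less_2_cases not_le)
  qed
  have "?u \<in> V" using q by (simp add: subset_iff)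
  then show ?thesis using nb by blast
qed

lemma xi_bound: "forest V E \<Longrightarrow> xi V E \<le> 2 ^ (card V div 2)"
proof (induction "card V" arbitrary: V E rule: less_induct)
  case less
  have sg: "simple_graph V E" using less.prems by (simp add: forest_def)
  have fin: "finite V" and sym: "\<And>x y. E x y \<Longrightarrow> E y x" and irr: "\<And>x. \<not> E x x"
    and inV: "\<And>x y. E x y \<Longrightarrow> x \<in> V \<and> y \<in> V"
    using sg by (auto simp: simple_graph_def)
  show ?case
  proof (cases "V = {}")
    case True
    have "mis V E \<subseteq> {{}}" using True by (auto simp: mis_def indep_set_def)
    then have "xi V E \<le> 1" unfolding xi_mis by (metis card.empty card.insert empty_iff finite.intros(1) card_mono finite_insert le_numeral_extra(4) One_nat_def)
    then show ?thesis using True by simp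
  next
    case False
    then obtain u where u: "u \<in> V" "\<And>w w'. E u w \<Longrightarrow> E u w' \<Longrightarrow> w = w'"
      using forest_leaf[OF less.prems] by blast
    show ?thesis
    proof (cases "\<exists>w. E u w")
      case True
      then obtain w where w: "E u w" by blast
      have wV: "w \<in> V" and uw: "u \<noteq> w" using inV[OF w] irr w by auto
      have nbu: "\<And>x. E u x \<longleftrightarrow> x = w" using u(2) w by blast
      let ?D = "{u, w}"
      have one: "\<exists>x\<in>?D. S \<inter> ?D = {x}" if S: "S \<in> mis V E" for S
      proof -
        have Si: "indep_set V E S" "card S = alpha V E" using S by (auto simp: mis_def)
        have "\<not> (u \<in> S \<and> w \<in> S)" using Si(1) w by (auto simp: indep_set_def)
        moreover have "u \<in> S \<or> w \<in> S"
        proof (rule ccontr)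
          assume "\<not> (u \<in> S \<or> w \<in> S)"
          then have "indep_set V E (insert u S)" "u \<notin> S"
            using insert_indep[OF sg Si(1) u(1)] nbu by auto
          moreover have "finite S" using Si fin by (auto simp: indep_set_def intro: finite_subset)
          ultimately have "card S + 1 \<le> alpha V E" using indep_le_alpha[OF fin] by fastforce
          then show False using Si by simp
        qed
        ultimately show ?thesis by blast
      qed
      have al: "alpha (V - ?D) (restr E ?D) + 1 \<le> alpha V E"
      proof -
        obtain T where T: "indep_set (V - ?D) (restr E ?D) T" "card T = alpha (V - ?D) (restr E ?D)"
          using alpha_attained[of "V - ?D"] fin by blast
        have TD: "T \<subseteq> V - ?D" using T by (simp add: indep_set_def)
        have "indep_set V E (insert u T)"
          using insert_indep[OF sg indep_restr[OF T(1)] u(1)] nbu TD by auto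
        moreover have "finite T" using TD fin by (auto intro: finite_subset)
        moreover have "u \<notin> T" using TD by auto
        ultimately have "card (insert u T) \<le> alpha V E" "card (insert u T) = card T + 1"
          using indep_le_alpha[OF fin, of E "insert u T"] by auto
        then show ?thesis using T by simp
      qed
      have "xi V E \<le> card ?D * xi (V - ?D) (restr E ?D)"
        unfolding xi_mis[of V] using cover[OF fin _ _ one al] by auto
      also have "\<dots> = 2 * xi (V - ?D) (restr E ?D)" using uw by simp
      also have "\<dots> \<le> 2 * 2 ^ (card (V - ?D) div 2)"
        using less.hyps[of "V - ?D" "restr E ?D"] forest_restr[OF less.prems] fin u wV uw card_gt_0_iff[of V]
        by (simp add: card_Diff_subset) (metis diff_less empty_iff zero_less_Suc)
      also have "card (V - ?D) = card V - 2" using u(1) wV uw fin by (simp add: card_Diff_subset)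
      also have "2 * 2 ^ ((card V - 2) div 2) = (2::nat) ^ (card V div 2)"
      proof -
        have "card V \<ge> 2" using u(1) wV uw fin
          by (metis card_2_iff card_mono empty_subsetI insert_subset)
        then have "card V div 2 = Suc ((card V - 2) div 2)" by (simp add: div_if)
        then show ?thesis by simp
      qed
      finally show ?thesis .
    next
      case False
      let ?D = "{u}"
      have one: "\<exists>x\<in>?D. S \<inter> ?D = {x}" if S: "S \<in> mis V E" for S
      proof -
        have Si: "indep_set V E S" "card S = alpha V E" using S by (auto simp: mis_def)
        have "u \<in> S"
        proof (rule ccontr)
          assume "u \<notin> S"
          then have "indep_set V E (insert u S)" "u \<notin> S"
            using insert_indep[OF sg Si(1) u(1)] False by auto
          moreover have "finite S" using Si fin by (auto simp: indep_set_def intro: finite_subset)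
          ultimately have "card S + 1 \<le> alpha V E" using indep_le_alpha[OF fin] by fastforce
          then show False using Si by simp
        qed
        then show ?thesis by blast
      qed
      have al: "alpha (V - ?D) (restr E ?D) + 1 \<le> alpha V E"
      proof -
        obtain T where T: "indep_set (V - ?D) (restr E ?D) T" "card T = alpha (V - ?D) (restr E ?D)"
          using alpha_attained[of "V - ?D"] fin by blast
        have TD: "T \<subseteq> V - ?D" using T by (simp add: indep_set_def)
        have "indep_set V E (insert u T)"
          using insert_indep[OF sg indep_restr[OF T(1)] u(1)] False by auto
        moreover have "finite T" using TD fin by (auto intro: finite_subset)
        moreover have "u \<notin> T" using TD by auto
        ultimately have "card (insert u T) \<le> alpha V E" "card (insert u T) = card T + 1"
          using indep_le_alpha[OF fin, of E "insert u T"] by auto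
        then show ?thesis using T by simp
      qed
      have "xi V E \<le> card ?D * xi (V - ?D) (restr E ?D)"
        unfolding xi_mis[of V] using cover[OF fin _ _ one al] by auto
      also have "\<dots> = xi (V - ?D) (restr E ?D)" by simp
      also have "\<dots> \<le> 2 ^ (card (V - ?D) div 2)"
        using less.hyps[of "V - ?D" "restr E ?D"] forest_restr[OF less.prems] fin u card_gt_0_iff[of V]
        by (simp add: card_Diff_subset) (metis diff_less empty_iff zero_less_Suc One_nat_def)
      also have "\<dots> \<le> 2 ^ (card V div 2)"
        by (intro power_increasing div_le_mono) (auto simp: fin u card_Diff_singleton)
      finally show ?thesis .
    qed
  qed
qed

lemma del_vertex_restr: "del_vertex V E v = (V - {v}, restr E {v})"
  by (auto simp: del_vertex_def restr_def fun_eq_iff)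

lemma main_nat:
  assumes F: "forest V E" and n2: "card V \<ge> 2" and v: "v \<in> V"
  shows "xi V E \<le> (2 ^ ((card V - 2) div 2) + 1) * xi (V - {v}) (restr E {v})"
proof -
  have sg: "simple_graph V E" using F by (simp add: forest_def)
  have fin: "finite V" and sym: "\<And>x y. E x y \<Longrightarrow> E y x" and irr: "\<And>x. \<not> E x x"
    and inV: "\<And>x y. E x y \<Longrightarrow> x \<in> V \<and> y \<in> V"
    using sg by (auto simp: simple_graph_def)
  let ?V' = "V - {v}" and ?E' = "restr E {v}"
  let ?k = "(card V - 2) div 2"
  have x1: "xi ?V' ?E' \<ge> 1" using fin by (intro xi_pos) simp
  have ale: "alpha ?V' ?E' \<le> alpha V E" using alpha_restr_le fin by blast
  show ?thesis
  proof (cases "alpha ?V' ?E' = alpha V E")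
    case False
    have one: "\<exists>x\<in>{v}. S \<inter> {v} = {x}" if S: "S \<in> mis V E" for S
    proof -
      have Si: "indep_set V E S" "card S = alpha V E" using S by (auto simp: mis_def)
      have "v \<in> S"
      proof (rule ccontr)
        assume "v \<notin> S"
        then have "indep_set ?V' ?E' S" using Si by (intro indep_restr2) auto
        then have "card S \<le> alpha ?V' ?E'" using fin indep_le_alpha by blast
        then show False using Si False ale by simp
      qed
      then show ?thesis by blast
    qed
    have "xi V E \<le> card {v} * xi ?V' ?E'"
      unfolding xi_mis[of V] using cover[OF fin _ _ one] False ale by auto
    also have "\<dots> \<le> (2 ^ ?k + 1) * xi ?V' ?E'" by simp
    finally show ?thesis .
  next
    case True
    let ?P = "{S \<in> mis V E. v \<in> S}"
    have sub: "mis V E \<subseteq> mis ?V' ?E' \<union> ?P"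
    proof
      fix S assume S: "S \<in> mis V E"
      show "S \<in> mis ?V' ?E' \<union> ?P"
      proof (cases "v \<in> S")
        case False
        then have "indep_set ?V' ?E' S" using S by (intro indep_restr2) (auto simp: mis_def)
        then show ?thesis using S True by (auto simp: mis_def)
      qed (use S in auto)
    qed
    obtain w where w: "E v w"
    proof (rule ccontr)
      assume nw: "\<not> thesis"
      have nbv: "\<And>x. \<not> E v x" using nw that by blast
      obtain T where T: "indep_set ?V' ?E' T" "card T = alpha ?V' ?E'"
        using alpha_attained[of ?V'] fin by blast
      have TD: "T \<subseteq> ?V'" using T by (simp add: indep_set_def)
      have "indep_set V E (insert v T)"
        using insert_indep[OF sg indep_restr[OF T(1)] v] nbv by auto
      moreover have "finite T" using TD fin by (auto intro: finite_subset)
      moreover have "v \<notin> T" using TD by auto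
      ultimately have "card (insert v T) \<le> alpha V E" "card (insert v T) = card T + 1"
        using indep_le_alpha[OF fin, of E "insert v T"] by auto
      then show False using T True by simp
    qed
    have wV: "w \<in> V" and vw: "v \<noteq> w" using inV[OF w] irr w by auto
    let ?D = "insert v {x. E v x}"
    have one: "\<exists>x\<in>{v}. S \<inter> ?D = {x}" if S: "S \<in> ?P" for S
    proof -
      have Si: "indep_set V E S" "v \<in> S" using S by (auto simp: mis_def)
      then have "S \<inter> ?D = {v}" by (auto simp: indep_set_def)
      then show ?thesis by blast
    qed
    have al: "alpha (V - ?D) (restr E ?D) + 1 \<le> alpha V E"
    proof -
      obtain T where T: "indep_set (V - ?D) (restr E ?D) T" "card T = alpha (V - ?D) (restr E ?D)"
        using alpha_attained[of "V - ?D"] fin by blast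
      have TD: "T \<subseteq> V - ?D" using T by (simp add: indep_set_def)
      have "indep_set V E (insert v T)"
        using insert_indep[OF sg indep_restr[OF T(1)] v] TD by auto
      moreover have "finite T" using TD fin by (auto intro: finite_subset)
      moreover have "v \<notin> T" using TD by auto
      ultimately have "card (insert v T) \<le> alpha V E" "card (insert v T) = card T + 1"
        using indep_le_alpha[OF fin, of E "insert v T"] by auto
      then show ?thesis using T by simp
    qed
    have Psub: "?P \<subseteq> mis V E" by blast
    have "card ?P \<le> card {v} * xi (V - ?D) (restr E ?D)"
      by (rule cover[OF fin Psub _ one al]) simp
    also have "\<dots> \<le> 2 ^ (card (V - ?D) div 2)"
      using xi_bound[OF forest_restr[OF F]] by simp
    also have "\<dots> \<le> 2 ^ ?k"
    proof -
      have "V - ?D \<subseteq> V - {v, w}" using w by auto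
      then have "card (V - ?D) \<le> card (V - {v, w})" using fin by (intro card_mono) auto
      also have "\<dots> = card V - 2" using fin v wV vw by (simp add: card_Diff_subset)
      finally show ?thesis by (intro power_increasing div_le_mono) auto
    qed
    finally have cP: "card ?P \<le> 2 ^ ?k" .
    have "xi V E \<le> card (mis ?V' ?E' \<union> ?P)"
    proof -
      have f1: "finite (mis ?V' ?E')" using fin by (intro finite_mis) simp
      have f2: "finite ?P" using finite_mis[OF fin, of E] by (rule finite_subset[rotated]) blast
      show ?thesis unfolding xi_mis using sub f1 f2 by (intro card_mono) auto
    qed
    also have "\<dots> \<le> xi ?V' ?E' + card ?P" unfolding xi_mis by (rule card_Un_le)
    also have "\<dots> \<le> xi ?V' ?E' + 2 ^ ?k * xi ?V' ?E'" 
    proof -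
      have "(2::nat) ^ ?k * 1 \<le> 2 ^ ?k * xi ?V' ?E'" using x1 by (intro mult_le_mono2)
      then show ?thesis using cP by linarith
    qed
    finally show ?thesis by (simp add: algebra_simps)
  qed
qed

theorem lemma3:
  fixes V :: "'a set" and E :: "'a \<Rightarrow> 'a \<Rightarrow> bool" and v :: 'a
  assumes "forest V E" and "card V \<ge> 2" and "v \<in> V"
  shows "real (xi V E) / real (xi (fst (del_vertex V E v)) (snd (del_vertex V E v)))
           \<le> (if odd (card V) then 2 ^ ((card V - 3) div 2) + 1
              else 2 ^ ((card V - 2) div 2) + 1)"
proof -
  let ?k = "(card V - 2) div 2"
  have fin: "finite V" using assms(1) by (simp add: forest_def simple_graph_def)
  have x1: "xi (V - {v}) (restr E {v}) \<ge> 1" using fin by (intro xi_pos) simp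
  have m: "xi V E \<le> (2 ^ ?k + 1) * xi (V - {v}) (restr E {v})" by (rule main_nat[OF assms])
  have "real (xi V E) \<le> (2 ^ ?k + 1) * real (xi (V - {v}) (restr E {v}))"
    using of_nat_mono[OF m, where 'a=real] by (simp add: algebra_simps)
  then have r: "real (xi V E) / real (xi (V - {v}) (restr E {v})) \<le> 2 ^ ?k + 1"
    using x1 by (simp add: divide_le_eq)
  have "(if odd (card V) then 2 ^ ((card V - 3) div 2) + 1
              else 2 ^ ((card V - 2) div 2) + 1) = (2::real) ^ ?k + 1"
  proof -
    have "odd (card V) \<Longrightarrow> (card V - 3) div 2 = ?k" using assms(2) by presburger
    then show ?thesis by auto
  qed
  then show ?thesis using r by (simp add: del_vertex_restr)
qed

end
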